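(* For every integer $n\ge 2$ and every $L=2^n+k$ with $0\le k<2^n$, $$\mathcal{C}(L+1)-\mathcal{C}(L)=\begin{cases}3, & 0\le k<2^{n-1},\\ 2, & 2^{n-1}\le k<2^n.\end{cases}$$
   Context: Let $\mathcal{A}=\{a,x,y,z\}$ and let $\tau$ be the substitution (monoid morphism on finite words over $\mathcal{A}$) defined by $\tau(a)=axa$, $\tau(x)=y$, $\tau(y)=z$, $\tau(z)=x$. For a finite word $w$, $\mathrm{Sub}(w)$ denotes the set of finite (contiguous) subwords of $w$. Let $\mathrm{Sub}_\tau=\bigcup_{s\in\mathcal{A},\,n\in\mathbb{N}\cup\{0\}}\mathrm{Sub}(\tau^n(s))$. The word complexity is $\mathcal{C}(L)=$ the number of elements of $\mathrm{Sub}_\tau$ of length $L$. *)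

theory Defs
  imports Main "HOL-Library.Sublist"
begin

datatype letter = A | X | Y | Z

fun tau_letter :: "letter \<Rightarrow> letter list" where
  "tau_letter A = [A, X, A]"
| "tau_letter X = [Y]"
| "tau_letter Y = [Z]"
| "tau_letter Z = [X]"

definition tau :: "letter list \<Rightarrow> letter list" where
  "tau w = concat (map tau_letter w)"

definition Sub :: "letter list \<Rightarrow> letter list set" where
  "Sub w = {u. sublist u w}"

definition Sub_tau :: "letter list set" where
  "Sub_tau = (\<Union>s. \<Union>n. Sub ((tau ^^ n) [s]))"

definition complexity :: "nat \<Rightarrow> nat" where
  "complexity L = card {u \<in> Sub_tau. length u = L}"

end

theory Submission
  imports Defs
begin

fun g :: "letter \<Rightarrow> letter" where
  "g A = X" | "g X = Y" | "g Y = Z" | "g Z = X"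

function u :: "nat \<Rightarrow> letter" where
  "u p = (if even p then A else g (u (p div 2)))"
  by auto
termination
  by (relation "measure id") (auto elim: oddE)

declare u.simps[simp del]

lemma u_even: "u (2*q) = A" by (subst u.simps) simp
lemma u_odd: "u (2*q+1) = g (u q)" by (subst u.simps) simp
lemma u_odd': "u (Suc (2*q)) = g (u q)" using u_odd by simp

lemma g_ne_A: "g c \<noteq> A" by (cases c) auto

lemma u_A_iff: "u p = A \<longleftrightarrow> even p"
proof (cases "even p")
  case True then obtain q where "p = 2*q" by blast
  then show ?thesis using u_even True by simp
next
  case False then obtain q where "p = 2*q+1" using oddE by blast
  then show ?thesis using u_odd g_ne_A False by simp
qed

fun fac :: "nat \<Rightarrow> nat \<Rightarrow> letter list" where
  "fac p 0 = []"
| "fac p (Suc L) = u p # fac (Suc p) L"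

lemma fac_map: "fac p L = map u [p..<p+L]"
  by (induction L arbitrary: p) (simp_all add: upt_conv_Cons del: upt_Suc)

lemma length_fac[simp]: "length (fac p L) = L"
  by (induction L arbitrary: p) auto

definition E :: "letter list \<Rightarrow> letter list" where
  "E v = concat (map (\<lambda>c. [A, g c]) v)"
definition Od :: "letter list \<Rightarrow> letter list" where
  "Od v = concat (map (\<lambda>c. [g c, A]) v)"

lemma fac_ee: "fac (2*q) (2*m) = E (fac q m)"
proof (induction m arbitrary: q)
  case 0 then show ?case by (simp add: E_def)
next
  case (Suc m)
  have "fac (2*q) (2*Suc m) = u (2*q) # u (Suc (2*q)) # fac (2*(Suc q)) (2*m)"
    by (simp add: numeral_2_eq_2)
  also have "\<dots> = A # g (u q) # E (fac (Suc q) m)" using Suc.IH[of "Suc q"] u_even[of q] u_even[of "Suc q"] u_odd'[of q] by simp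
  finally show ?case by (simp add: E_def)
qed

lemma fac_oe: "fac (2*q+1) (2*m) = Od (fac q m)"
proof (induction m arbitrary: q)
  case 0 then show ?case by (simp add: Od_def)
next
  case (Suc m)
  have "fac (2*q+1) (2*Suc m) = u (Suc (2*q)) # u (2*Suc q) # fac (2*(Suc q)+1) (2*m)"
    by (simp add: numeral_2_eq_2)
  also have "\<dots> = g (u q) # A # Od (fac (Suc q) m)" using Suc.IH[of "Suc q"] u_even[of q] u_even[of "Suc q"] u_odd'[of q] by simp
  finally show ?case by (simp add: Od_def)
qed

lemma fac_eo: "fac (2*q) (2*m+1) = E (fac q m) @ [A]"
proof (induction m arbitrary: q)
  case 0 then show ?case by (simp add: E_def u_even)
next
  case (Suc m)
  have "fac (2*q) (2*Suc m+1) = u (2*q) # u (Suc (2*q)) # fac (2*(Suc q)) (2*m+1)"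
    by (simp add: numeral_2_eq_2)
  also have "\<dots> = A # g (u q) # E (fac (Suc q) m) @ [A]" using Suc.IH[of "Suc q"] u_even[of q] u_even[of "Suc q"] u_odd'[of q] by simp
  finally show ?case by (simp add: E_def)
qed

lemma Od_ne: "v \<noteq> [] \<Longrightarrow> Od v \<noteq> []" by (cases v) (auto simp: Od_def)

lemma fac_oo: "fac (2*q+1) (2*m+1) = butlast (Od (fac q (m+1)))"
proof (induction m arbitrary: q)
  case 0 then show ?case by (simp add: Od_def u_odd')
next
  case (Suc m)
  have "fac (2*q+1) (2*Suc m+1) = u (Suc (2*q)) # u (2*Suc q) # fac (2*(Suc q)+1) (2*m+1)"
    by (simp add: numeral_2_eq_2)
  also have "\<dots> = g (u q) # A # butlast (Od (fac (Suc q) (m+1)))" using Suc.IH[of "Suc q"] u_even[of q] u_even[of "Suc q"] u_odd'[of q] by simp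
  also have "\<dots> = butlast (g (u q) # A # Od (fac (Suc q) (m+1)))"
    using Od_ne[of "fac (Suc q) (m+1)"] by (simp add: butlast.simps)
  finally show ?case by (simp add: Od_def)
qed

definition F :: "nat \<Rightarrow> letter list set" where
  "F L = range (\<lambda>p. fac p L)"

lemma nat_cases2: fixes p :: nat obtains q where "p = 2*q" | q where "p = 2*q+1"
  by (metis oddE evenE)

lemma F_even: "F (2*m) = E ` F m \<union> Od ` F m"
proof
  show "F (2*m) \<subseteq> E ` F m \<union> Od ` F m"
  proof
    fix v assume "v \<in> F (2*m)"
    then obtain p where v: "v = fac p (2*m)" by (auto simp: F_def)
    show "v \<in> E ` F m \<union> Od ` F m"
    proof (cases p rule: nat_cases2)
      case (1 q) then have "v = E (fac q m)" by (simp only: v fac_ee)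
      then show ?thesis by (auto simp: F_def)
    next
      case (2 q) then have "v = Od (fac q m)" by (simp only: v fac_oe)
      then show ?thesis by (auto simp: F_def)
    qed
  qed
  show "E ` F m \<union> Od ` F m \<subseteq> F (2*m)"
    unfolding F_def by (auto simp: fac_ee[symmetric] fac_oe[symmetric])
qed

lemma F_odd: "F (2*m+1) = (\<lambda>v. E v @ [A]) ` F m \<union> (\<lambda>v. butlast (Od v)) ` F (m+1)"
proof
  show "F (2*m+1) \<subseteq> (\<lambda>v. E v @ [A]) ` F m \<union> (\<lambda>v. butlast (Od v)) ` F (m+1)"
  proof
    fix v assume "v \<in> F (2*m+1)"
    then obtain p where v: "v = fac p (2*m+1)" by (auto simp: F_def)
    show "v \<in> (\<lambda>v. E v @ [A]) ` F m \<union> (\<lambda>v. butlast (Od v)) ` F (m+1)"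
    proof (cases p rule: nat_cases2)
      case (1 q) then have "v = E (fac q m) @ [A]" by (simp only: v fac_eo)
      then show ?thesis by (auto simp: F_def)
    next
      case (2 q) then have "v = butlast (Od (fac q (m+1)))" by (simp only: v fac_oo)
      then show ?thesis by (auto simp: F_def)
    qed
  qed
  show "(\<lambda>v. E v @ [A]) ` F m \<union> (\<lambda>v. butlast (Od v)) ` F (m+1) \<subseteq> F (2*m+1)"
  proof -
    have 1: "E (fac q m) @ [A] \<in> F (2*m+1)" for q using fac_eo[of q m] unfolding F_def by (metis rangeI)
    have 2: "butlast (Od (fac q (m+1))) \<in> F (2*m+1)" for q using fac_oo[of q m] unfolding F_def by (metis rangeI)
    show ?thesis unfolding F_def[of m] F_def[of "m+1"] using 1 2 by blast
  qed
qed

lemma UNIV_letter: "(UNIV :: letter set) = {A, X, Y, Z}"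
proof -
  have "x \<in> {A, X, Y, Z}" for x by (cases x) auto
  then show ?thesis by blast
qed

lemma finite_F: "finite (F L)"
proof -
  have "F L \<subseteq> {xs. set xs \<subseteq> UNIV \<and> length xs = L}" by (auto simp: F_def)
  moreover have "finite {xs. set xs \<subseteq> (UNIV::letter set) \<and> length xs = L}"
    by (rule finite_lists_length_eq) (simp add: UNIV_letter)
  ultimately show ?thesis by (rule finite_subset)
qed

lemma g_eq: "g c = g d \<Longrightarrow> c = d \<or> (c = A \<and> d = Z) \<or> (c = Z \<and> d = A)"
  by (cases c; cases d) auto

lemma g_Z: "g c = Z \<Longrightarrow> c = Y" by (cases c) auto

lemma no_ZZ: assumes "odd r" "u r = Z" "u (r+2) = Z" shows False
proof -
  obtain j where r: "r = 2*j+1" using assms(1) oddE by blast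
  have "g (u j) = Z" using assms(2) u_odd r by simp
  then have "u j = Y" by (rule g_Z)
  then have "odd j" using u_A_iff[of j] by auto
  have "r + 2 = 2*(j+1)+1" using r by simp
  then have "g (u (j+1)) = Z" using assms(3) u_odd[of "j+1"] by simp
  then have "u (j+1) = Y" by (rule g_Z)
  then have "odd (j+1)" using u_A_iff[of "j+1"] by auto
  with \<open>odd j\<close> show False by simp
qed

lemma nth_fac: "i < L \<Longrightarrow> fac p L ! i = u (p+i)"
  by (simp add: fac_map)

lemma inj_F: assumes "3 \<le> k" shows "inj_on (map g) (F k)"
proof (rule inj_onI)
  fix v w assume "v \<in> F k" "w \<in> F k" and eq: "map g v = map g w"
  then obtain p q where v: "v = fac p k" and w: "w = fac q k" by (auto simp: F_def)
  have h: "g (u (p+i)) = g (u (q+i))" if "i < k" for i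
  proof -
    have "map g v ! i = map g w ! i" using eq by simp
    then show ?thesis using that by (simp add: v w nth_fac)
  qed
  show "v = w"
  proof (cases "even p = even q")
    case True
    show ?thesis
    proof (rule nth_equalityI)
      show "length v = length w" by (simp add: v w)
      fix i assume "i < length v"
      then have i: "i < k" by (simp add: v)
      have "even (p+i) = even (q+i)" using True by simp
      then have "(u (p+i) = A) = (u (q+i) = A)" by (simp add: u_A_iff)
      then have "u (p+i) = u (q+i)" using g_eq[OF h[OF i]] by auto
      then show "v ! i = w ! i" using i by (simp add: v w nth_fac)
    qed
  next
    case False
    have key: "(odd (p+i) \<longrightarrow> u (p+i) = Z) \<and> (odd (q+i) \<longrightarrow> u (q+i) = Z)" if "i < k" for i
    proof -
      have "even (p+i) \<noteq> even (q+i)" using False by (cases "even i") auto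
      then have "(u (p+i) = A) \<noteq> (u (q+i) = A)" by (simp add: u_A_iff)
      then show ?thesis using g_eq[OF h[OF that]] u_A_iff[of "p+i"] u_A_iff[of "q+i"] by auto
    qed
    have k0: "0 < k" and k2: "2 < k" using assms by auto
    show ?thesis
    proof (cases "odd p")
      case True
      with False have "even q" by simp
      have "u p = Z" using key[OF k0] True by simp
      moreover have "u (p+2) = Z" using key[OF k2] True by simp
      ultimately have False using no_ZZ[OF True] by blast
      then show ?thesis ..
    next
      case c: False
      with False have "odd q" by simp
      have "u q = Z" using key[OF k0] \<open>odd q\<close> by simp
      moreover have "u (q+2) = Z" using key[OF k2] \<open>odd q\<close> by simp
      ultimately have False using no_ZZ[OF \<open>odd q\<close>] by blast
      then show ?thesis ..
    qed
  qed
qed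

lemma E_Cons: "E (a#v) = A # g a # E v" by (simp add: E_def)
lemma E_Nil: "E [] = []" by (simp add: E_def)
lemma Od_Cons: "Od (a#v) = g a # A # Od v" by (simp add: Od_def)
lemma Od_Nil: "Od [] = []" by (simp add: Od_def)

lemma E_inj: "E v = E w \<Longrightarrow> map g v = map g w"
proof (induction v arbitrary: w)
  case Nil then show ?case by (cases w) (simp_all only: E_Nil E_Cons, simp_all)
next
  case (Cons a v)
  show ?case
  proof (cases w)
    case Nil then show ?thesis using Cons.prems by (simp only: E_Nil E_Cons, simp)
  next
    case (Cons b w')
    then have "g a = g b" "E v = E w'" using Cons.prems by (simp_all only: E_Cons list.inject)
    then show ?thesis using Cons.IH[of w'] \<open>w = b # w'\<close> by simp
  qed
qed

lemma Od_inj: "Od v = Od w \<Longrightarrow> map g v = map g w"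
proof (induction v arbitrary: w)
  case Nil then show ?case by (cases w) (simp_all only: Od_Nil Od_Cons, simp_all)
next
  case (Cons a v)
  show ?case
  proof (cases w)
    case Nil then show ?thesis using Cons.prems by (simp only: Od_Nil Od_Cons, simp)
  next
    case (Cons b w')
    then have "g a = g b" "Od v = Od w'" using Cons.prems by (simp_all only: Od_Cons list.inject)
    then show ?thesis using Cons.IH[of w'] \<open>w = b # w'\<close> by simp
  qed
qed

lemma last_Od: "v \<noteq> [] \<Longrightarrow> last (Od v) = A"
proof (induction v)
  case Nil then show ?case by simp
next
  case (Cons a v) then show ?case by (cases "v = []") (simp_all add: Od_def)
qed

lemma Od_snoc: "v \<noteq> [] \<Longrightarrow> Od v = butlast (Od v) @ [A]"
  by (metis append_butlast_last_id last_Od Od_ne)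

lemma hd_E: "v \<noteq> [] \<Longrightarrow> hd (E v) = A" by (cases v) (auto simp: E_def)
lemma hd_Od: "v \<noteq> [] \<Longrightarrow> hd (Od v) \<noteq> A" by (cases v) (auto simp: Od_def g_ne_A)
lemma hd_bOd: "v \<noteq> [] \<Longrightarrow> hd (butlast (Od v)) \<noteq> A" by (cases v) (auto simp: Od_def g_ne_A)

lemma F_len: "v \<in> F m \<Longrightarrow> length v = m"
  by (auto simp: F_def)

lemma F_ne: "0 < m \<Longrightarrow> v \<in> F m \<Longrightarrow> v \<noteq> []"
  using F_len by fastforce

lemma inj_compose_g:
  assumes "inj_on (map g) S" "\<And>v w. v \<in> S \<Longrightarrow> w \<in> S \<Longrightarrow> h v = h w \<Longrightarrow> map g v = map g w"
  shows "inj_on h S"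
  using assms unfolding inj_on_def by blast

lemma card_even: assumes "3 \<le> m" shows "card (F (2*m)) = 2 * card (F m)"
proof -
  have ij: "inj_on (map g) (F m)" using inj_F assms by simp
  have "inj_on E (F m)" by (rule inj_compose_g[OF ij]) (rule E_inj)
  then have c1: "card (E ` F m) = card (F m)" by (rule card_image)
  have "inj_on Od (F m)" by (rule inj_compose_g[OF ij]) (rule Od_inj)
  then have c2: "card (Od ` F m) = card (F m)" by (rule card_image)
  have disj: "E ` F m \<inter> Od ` F m = {}"
  proof -
    have "E v \<noteq> Od w" if "v \<in> F m" "w \<in> F m" for v w
      using hd_E[OF F_ne[OF _ that(1)]] hd_Od[OF F_ne[OF _ that(2)]] assms by auto
    then show ?thesis by blast
  qed
  have "card (F (2*m)) = card (E ` F m) + card (Od ` F m)"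
    unfolding F_even by (rule card_Un_disjoint[OF finite_imageI[OF finite_F] finite_imageI[OF finite_F] disj])
  then show ?thesis using c1 c2 by simp
qed

lemma card_odd: assumes "3 \<le> m" shows "card (F (2*m+1)) = card (F m) + card (F (m+1))"
proof -
  have ij: "inj_on (map g) (F m)" using inj_F assms by simp
  have ij2: "inj_on (map g) (F (m+1))" using inj_F assms by simp
  have "inj_on (\<lambda>v. E v @ [A]) (F m)" by (rule inj_compose_g[OF ij]) (auto intro: E_inj)
  then have c1: "card ((\<lambda>v. E v @ [A]) ` F m) = card (F m)" by (rule card_image)
  have "inj_on (\<lambda>v. butlast (Od v)) (F (m+1))"
  proof (rule inj_compose_g[OF ij2])
    fix v w assume "v \<in> F (m+1)" "w \<in> F (m+1)" "butlast (Od v) = butlast (Od w)"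
    moreover have "v \<noteq> []" "w \<noteq> []" using F_ne \<open>v \<in> F (m+1)\<close> \<open>w \<in> F (m+1)\<close> by auto
    ultimately have "Od v = Od w" using Od_snoc by metis
    then show "map g v = map g w" by (rule Od_inj)
  qed
  then have c2: "card ((\<lambda>v. butlast (Od v)) ` F (m+1)) = card (F (m+1))" by (rule card_image)
  have disj: "(\<lambda>v. E v @ [A]) ` F m \<inter> (\<lambda>v. butlast (Od v)) ` F (m+1) = {}"
  proof -
    have "E v @ [A] \<noteq> butlast (Od w)" if "v \<in> F m" "w \<in> F (m+1)" for v w
    proof -
      have "hd (E v @ [A]) = A" using hd_E[OF F_ne[OF _ that(1)]] assms by (simp add: hd_append)
      moreover have "hd (butlast (Od w)) \<noteq> A" using hd_bOd[OF F_ne[OF _ that(2)]] by simp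
      ultimately show ?thesis by metis
    qed
    then show ?thesis by blast
  qed
  have "card (F (2*m+1)) = card ((\<lambda>v. E v @ [A]) ` F m) + card ((\<lambda>v. butlast (Od v)) ` F (m+1))"
    unfolding F_odd by (rule card_Un_disjoint[OF finite_imageI[OF finite_F] finite_imageI[OF finite_F] disj])
  then show ?thesis using c1 c2 by simp
qed


definition d :: "nat \<Rightarrow> int" where
  "d L = int (card (F (L+1))) - int (card (F L))"

lemma d_even: assumes "3 \<le> m" shows "d (2*m) = d m"
  using card_even[OF assms] card_odd[OF assms] by (simp add: d_def)

lemma d_odd: assumes "3 \<le> m" shows "d (2*m+1) = d m"
proof -
  have "card (F (2*(m+1))) = 2 * card (F (m+1))" using card_even[of "m+1"] assms by simp
  then have "card (F (2*m+1+1)) = 2 * card (F (m+1))" by (simp add: algebra_simps)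
  then show ?thesis using card_odd[OF assms] by (simp add: d_def)
qed

lemma range_u: "range u = UNIV"
proof -
  have "u 0 = A" using u_even[of 0] by simp
  moreover have "u 1 = X" using u_odd[of 0] u_even[of 0] by simp
  moreover have "u 3 = Y" using u_odd[of 1] \<open>u 1 = X\<close> by simp
  moreover have "u 7 = Z" using u_odd[of 3] \<open>u 3 = Y\<close> by simp
  ultimately have "{A, X, Y, Z} \<subseteq> range u" by (metis empty_subsetI insert_subset rangeI)
  then show ?thesis using UNIV_letter by auto
qed

lemma F1: "F 1 = {[A], [X], [Y], [Z]}"
proof -
  have "F 1 = (\<lambda>c. [c]) ` range u" unfolding F_def by (auto simp: image_image)
  then show ?thesis using range_u by (simp add: UNIV_letter)
qed

lemma F2: "F 2 = E ` F 1 \<union> Od ` F 1" using F_even[of 1] by simp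
lemma F3: "F 3 = (\<lambda>v. E v @ [A]) ` F 1 \<union> (\<lambda>v. butlast (Od v)) ` F 2"
proof -
  have h: "F (2*1+1) = (\<lambda>v. E v @ [A]) ` F 1 \<union> (\<lambda>v. butlast (Od v)) ` F (1+1)" by (rule F_odd)
  have e1: "(2::nat)*1+1 = 3" and e2: "(1::nat)+1 = 2" by simp_all
  show ?thesis using h unfolding e1 e2 .
qed
lemma F4: "F 4 = E ` F 2 \<union> Od ` F 2" using F_even[of 2] by simp
lemma F5: "F 5 = (\<lambda>v. E v @ [A]) ` F 2 \<union> (\<lambda>v. butlast (Od v)) ` F 3"
proof -
  have h: "F (2*2+1) = (\<lambda>v. E v @ [A]) ` F 2 \<union> (\<lambda>v. butlast (Od v)) ` F (2+1)" by (rule F_odd)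
  have e1: "(2::nat)*2+1 = 5" and e2: "(2::nat)+1 = 3" by simp_all
  show ?thesis using h unfolding e1 e2 .
qed

definition L1 :: "letter list list" where "L1 = [[A],[X],[Y],[Z]]"
definition L2 :: "letter list list" where "L2 = map E L1 @ map Od L1"
definition L3 :: "letter list list" where "L3 = map (\<lambda>v. E v @ [A]) L1 @ map (\<lambda>v. butlast (Od v)) L2"
definition L4 :: "letter list list" where "L4 = map E L2 @ map Od L2"
definition L5 :: "letter list list" where "L5 = map (\<lambda>v. E v @ [A]) L2 @ map (\<lambda>v. butlast (Od v)) L3"

lemma F1l: "F 1 = set L1" unfolding F1 L1_def by simp
lemma F2l: "F 2 = set L2" unfolding F2 F1l L2_def by (simp add: image_Un)
lemma F3l: "F 3 = set L3" unfolding F3 F1l F2l L3_def by (simp add: image_Un)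
lemma F4l: "F 4 = set L4" unfolding F4 F2l L4_def by (simp add: image_Un)
lemma F5l: "F 5 = set L5" unfolding F5 F2l F3l L5_def by (simp add: image_Un)

lemma L2e: "L2 = [[A,X],[A,Y],[A,Z],[A,X],[X,A],[Y,A],[Z,A],[X,A]]"
  by (simp add: L2_def L1_def E_def Od_def)
lemma L3e: "L3 = [[A,X,A],[A,Y,A],[A,Z,A],[A,X,A],[X,A,Y],[X,A,Z],[X,A,X],[X,A,Y],[Y,A,X],[Z,A,X],[X,A,X],[Y,A,X]]"
  by (simp add: L3_def L2e L1_def E_def Od_def)

lemma card3: "card (F 3) = 8" unfolding F3l L3e card_set by simp
lemma card4: "card (F 4) = 10" unfolding F4l L4_def L2e card_set by (simp add: E_def Od_def)
lemma card5: "card (F 5) = 13" unfolding F5l L5_def L2e L3e card_set by (simp add: E_def Od_def)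


lemma d4: "d 4 = 3" and d5: "d 5 = 3" and d6: "d 6 = 2" and d7: "d 7 = 2"
proof -
  have c6: "card (F 6) = 16" using card_even[of 3] card3 by simp
  have c7: "card (F 7) = 18" using card_odd[of 3] card3 card4 by simp
  have c8: "card (F 8) = 20" using card_even[of 4] card4 by simp
  show "d 4 = 3" using card4 card5 by (simp add: d_def)
  show "d 5 = 3" using c6 card5 by (simp add: d_def)
  show "d 6 = 2" using c6 c7 by (simp add: d_def)
  show "d 7 = 2" using c7 c8 by (simp add: d_def)
qed

lemma d_main: "2 \<le> n \<Longrightarrow> k < 2^n \<Longrightarrow> d (2^n + k) = (if k < 2^(n-1) then 3 else 2)"
proof (induction n arbitrary: k rule: nat_induct_at_least)
  case base
  then have "k = 0 \<or> k = 1 \<or> k = 2 \<or> k = 3" by auto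
  then show ?case using d4 d5 d6 d7 by auto
next
  case (Suc n)
  define m where "m = 2^n + k div 2"
  have kd: "k div 2 < 2^n" using Suc.prems by simp
  have IH: "d m = (if k div 2 < 2^(n-1) then 3 else 2)" unfolding m_def using Suc.IH[OF kd] .
  have pn: "(2::nat)^n = 2 * 2^(n-1)" using Suc.hyps by (cases n) auto
  have cond: "(k div 2 < 2^(n-1)) = (k < 2^(Suc n - 1))" using pn by auto
  have "(2::nat)^2 \<le> 2^n" using Suc.hyps by (rule power_increasing) simp
  then have m3: "3 \<le> m" unfolding m_def by simp
  have "d (2^Suc n + k) = d m"
  proof (cases "even k")
    case True
    then have "2^Suc n + k = 2*m" unfolding m_def by auto
    then show ?thesis using d_even[OF m3] by simp
  next
    case False
    then have "2^Suc n + k = 2*m+1" unfolding m_def by (auto elim: oddE)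
    then show ?thesis using d_odd[OF m3] by simp
  qed
  then show ?case using IH cond by simp
qed


lemma tau_append: "tau (xs @ ys) = tau xs @ tau ys" by (simp add: tau_def)

lemma taun_append: "(tau ^^ n) (xs @ ys) = (tau ^^ n) xs @ (tau ^^ n) ys"
  by (induction n) (simp_all add: tau_append)

lemma taun_Cons: "(tau ^^ n) (x # xs) = (tau ^^ n) [x] @ (tau ^^ n) xs"
  using taun_append[of n "[x]" xs] by simp

lemma tau_single: "c \<noteq> A \<Longrightarrow> tau [c] = [g c]"
  by (cases c) (simp_all add: tau_def)

lemma gpow_ne: "c \<noteq> A \<Longrightarrow> (g ^^ n) c \<noteq> A"
  by (induction n) (simp_all add: g_ne_A)

lemma taun_single: "c \<noteq> A \<Longrightarrow> (tau ^^ n) [c] = [(g ^^ n) c]"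
  by (induction n) (simp_all add: tau_single gpow_ne)

lemma W_Suc: "(tau ^^ Suc n) [A] = (tau ^^ n) [A] @ [(g ^^ n) X] @ (tau ^^ n) [A]"
proof -
  have "(tau ^^ Suc n) [A] = (tau ^^ n) (tau [A])" by (simp add: funpow_Suc_right del: funpow.simps)
  also have "tau [A] = [A, X, A]" by (simp add: tau_def)
  finally show ?thesis using taun_Cons[of n A "[X, A]"] taun_Cons[of n X "[A]"] taun_single[of X n] by simp
qed

lemma u_per: "i < 2^(Suc n) - 1 \<Longrightarrow> u (2^(Suc n) + i) = u i"
proof (induction n arbitrary: i)
  case 0
  then have "i = 0" by simp
  then show ?case using u_even[of 1] u_even[of 0] by simp
next
  case (Suc n)
  show ?case
  proof (cases "even i")
    case True
    then obtain j where j: "i = 2*j" by blast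
    have "2^Suc (Suc n) + i = 2*(2^Suc n + j)" by (simp add: j)
    then have "u (2^Suc (Suc n) + i) = A" using u_even by metis
    then show ?thesis using u_even j by simp
  next
    case False
    then obtain j where j: "i = 2*j+1" using oddE by blast
    have jl: "j < 2^Suc n - 1" using Suc.prems j by simp
    have "2^Suc (Suc n) + i = 2*(2^Suc n + j)+1" by (simp add: j)
    then have "u (2^Suc (Suc n) + i) = u (2*(2^Suc n + j)+1)" by simp
    also have "\<dots> = g (u (2^Suc n + j))" by (rule u_odd)
    also have "\<dots> = g (u j)" using Suc.IH[OF jl] by simp
    also have "\<dots> = u i" using u_odd j by simp
    finally show ?thesis .
  qed
qed

lemma u_mid: "u (2^(Suc n) - 1) = (g ^^ n) X"
proof (induction n)
  case 0
  then show ?case using u_odd[of 0] u_even[of 0] by simp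
next
  case (Suc n)
  have aux: "\<And>x::nat. 0 < x \<Longrightarrow> 2*(2*x) - 1 = 2*(2*x - 1)+1" by arith
  have "(2::nat)^Suc (Suc n) - 1 = 2*(2^Suc n - 1)+1" using aux[of "2^n"] by simp
  then have "u (2^Suc (Suc n) - 1) = g (u (2^Suc n - 1))" using u_odd by metis
  then show ?case using Suc.IH by simp
qed

lemma W_map: "(tau ^^ n) [A] = map u [0..<2^(Suc n) - 1]"
proof (induction n)
  case 0
  then show ?case using u_even[of 0] by simp
next
  case (Suc n)
  define N where "N = (2::nat)^Suc n - 1"
  have N1: "N + 1 = 2^Suc n" unfolding N_def by simp
  have eN: "(2::nat)^Suc (Suc n) - 1 = N + 1 + N" unfolding N_def by simp
  have split: "[0..<N+1+N] = [0..<N] @ [N] @ [N+1..<N+1+N]"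
    by (simp add: upt_add_eq_append[of 0 N] upt_add_eq_append[of "N" "N+1" N, simplified])
  have tail: "map u [N+1..<N+1+N] = map u [0..<N]"
  proof (rule nth_equalityI)
    show "length (map u [N+1..<N+1+N]) = length (map u [0..<N])" by (simp del: upt_Suc)
    fix i assume "i < length (map u [N+1..<N+1+N])"
    then have i: "i < N" by (simp del: upt_Suc)
    have "u (N + 1 + i) = u i" using u_per[of i n] i N1 unfolding N_def by simp
    then show "map u [N+1..<N+1+N] ! i = map u [0..<N] ! i" using i by (simp del: upt_Suc)
  qed
  have "(tau ^^ Suc n) [A] = map u [0..<N] @ [u N] @ map u [0..<N]"
    using W_Suc[of n] Suc.IH u_mid[of n] unfolding N_def by simp
  also have "\<dots> = map u [0..<N+1+N]" using split tail by simp
  finally show ?case using eN by simp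
qed

lemma sublist_fac: "sublist v (map u [0..<M]) \<Longrightarrow> v \<in> F (length v)"
proof -
  assume "sublist v (map u [0..<M])"
  then obtain ps ss where e: "map u [0..<M] = ps @ v @ ss" by (auto simp: sublist_def)
  have "v = fac (length ps) (length v)"
  proof (rule nth_equalityI)
    show "length v = length (fac (length ps) (length v))" by simp
    fix i assume i: "i < length v"
    have l: "length ps + i < M" using arg_cong[OF e, of length] i by simp
    have "(ps @ v @ ss) ! (length ps + i) = v ! i" using i by (simp add: nth_append)
    then have "v ! i = map u [0..<M] ! (length ps + i)" using e by simp
    also have "\<dots> = u (length ps + i)" using l by simp
    finally show "v ! i = fac (length ps) (length v) ! i" using i by (simp add: nth_fac)
  qed
  then show ?thesis unfolding F_def by blast
qed

lemma fac_sublist: "p + L \<le> M \<Longrightarrow> sublist (fac p L) (map u [0..<M])"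
proof -
  assume h: "p + L \<le> M"
  have "[0..<M] = [0..<p] @ [p..<p+L] @ [p+L..<M]"
    using h by (metis le_add1 le_add_same_cancel1 le_iff_add upt_add_eq_append zero_le append.assoc)
  then have "map u [0..<M] = map u [0..<p] @ fac p L @ map u [p+L..<M]" by (simp add: fac_map)
  then show ?thesis unfolding sublist_def by blast
qed

lemma sublist_single: "sublist v [c] \<Longrightarrow> v = [] \<or> v = [c]"
  unfolding sublist_def by (auto simp: Cons_eq_append_conv append_eq_Cons_conv)

lemma Sub_tau_F: "{v \<in> Sub_tau. length v = L} = F L"
proof
  show "{v \<in> Sub_tau. length v = L} \<subseteq> F L"
  proof
    fix v assume "v \<in> {v \<in> Sub_tau. length v = L}"
    then obtain s n where sv: "sublist v ((tau ^^ n) [s])" and len: "length v = L"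
      by (auto simp: Sub_tau_def Sub_def)
    show "v \<in> F L"
    proof (cases "s = A")
      case True
      then show ?thesis using sublist_fac[of v] sv len W_map[of n] by auto
    next
      case False
      then have "sublist v [(g ^^ n) s]" using sv taun_single by simp
      then have "v = [] \<or> v = [(g ^^ n) s]" by (rule sublist_single)
      then show ?thesis
      proof
        assume "v = []" then show ?thesis using len unfolding F_def by (auto intro: range_eqI[of _ _ 0])
      next
        assume v: "v = [(g ^^ n) s]"
        obtain p where "u p = (g ^^ n) s" using range_u by (metis UNIV_I imageE)
        then have "v = fac p 1" using v by simp
        then show ?thesis using len v unfolding F_def by auto
      qed
    qed
  qed
  show "F L \<subseteq> {v \<in> Sub_tau. length v = L}"
  proof
    fix v assume "v \<in> F L"
    then obtain p where v: "v = fac p L" by (auto simp: F_def)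
    have "p + L < 2^(p+L)" by (rule less_exp)
    moreover have "\<And>x y::nat. y < x \<Longrightarrow> y \<le> 2*x - 1" by arith
    ultimately have "p + L \<le> 2^(Suc (p+L)) - 1" by simp
    then have "sublist v ((tau ^^ (p+L)) [A])" using fac_sublist v W_map by simp
    then show "v \<in> {v \<in> Sub_tau. length v = L}" using v
      unfolding Sub_tau_def Sub_def by auto
  qed
qed

lemma complexity_F: "complexity L = card (F L)"
  unfolding complexity_def Sub_tau_F ..

theorem mainTheorem7:
  fixes n k L :: nat
  assumes "n \<ge> 2" and "k < 2 ^ n" and "L = 2 ^ n + k"
  shows "int (complexity (L + 1)) - int (complexity L) =
           (if k < 2 ^ (n - 1) then 3 else 2)"
  using d_main[OF assms(1,2)] assms(3) by (simp add: complexity_F d_def)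

end
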